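(* Let $\Gamma,\alpha>0$ and $l(y)=\frac{\alpha p(y)}{\alpha+\sqrt\Gamma g(y)}$. Then $H(y)=y^3 l(y)$ is strictly increasing on $(0,\infty)$; in particular $y\,l'(y)+3l(y)>0$ for all $y>0$.
   Context: $g(x)=\coth x-\frac1x$ and $p(x)=\frac{g(x)}{x}=\frac{x\coth x-1}{x^2}$ for $x>0$. *)

theory Defs
  imports "HOL-Analysis.Analysis"
begin

definition coth :: "real \<Rightarrow> real" where
  "coth x = cosh x / sinh x"

definition g :: "real \<Rightarrow> real" where
  "g x = coth x - 1 / x"

definition p :: "real \<Rightarrow> real" where
  "p x = g x / x"

definition l :: "real \<Rightarrow> real \<Rightarrow> real \<Rightarrow> real" where
  "l \<Gamma> \<alpha> y = \<alpha> * p y / (\<alpha> + sqrt \<Gamma> * g y)"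

definition H :: "real \<Rightarrow> real \<Rightarrow> real \<Rightarrow> real" where
  "H \<Gamma> \<alpha> y = y ^ 3 * l \<Gamma> \<alpha> y"

end

theory Submission
  imports Defs
begin

lemma sinh_ge: "0 \<le> (y::real) \<Longrightarrow> y \<le> sinh y"
  using real_le_x_sinh[of y] by (simp add: sinh_field_def exp_minus)

lemma ycosh_gt: assumes "0 < (y::real)" shows "sinh y < y * cosh y"
proof -
  have "(\<lambda>t. t * cosh t - sinh t) 0 < (\<lambda>t. t * cosh t - sinh t) y"
  proof (rule DERIV_pos_imp_increasing_open[OF assms])
    fix x :: real assume "0 < x" "x < y"
    then show "\<exists>d. ((\<lambda>t. t * cosh t - sinh t) has_real_derivative d) (at x) \<and> d > 0"
      by (intro exI[of _ "x * sinh x"]) (auto intro!: derivative_eq_intros)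
  next
    show "continuous_on {0..y} (\<lambda>t. t * cosh t - sinh t)"
      by (intro continuous_intros)
  qed
  then show ?thesis by simp
qed

lemma g_pos: "0 < (y::real) \<Longrightarrow> 0 < g y"
  using ycosh_gt[of y] by (simp add: g_def coth_def field_simps)

lemma g_deriv: assumes "0 < (y::real)"
  shows "(g has_real_derivative (1 / y^2 - 1 / (sinh y)^2)) (at y)"
proof -
  have s: "sinh y \<noteq> 0" using assms by simp
  have "((\<lambda>t. cosh t / sinh t - 1 / t) has_real_derivative (1 / y^2 - 1 / (sinh y)^2)) (at y)"
  proof -
    have c: "cosh y * cosh y = sinh y * sinh y + 1" using cosh_square_eq[of y] by (simp add: power2_eq_square)
    show ?thesis
      using assms s by (auto intro!: derivative_eq_intros simp: c field_simps power2_eq_square)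
  qed
  moreover have "(\<lambda>t. cosh t / sinh t - 1 / t) = g" by (auto simp: g_def coth_def fun_eq_iff)
  ultimately show ?thesis by simp
qed

lemma gd_nonneg: "0 < (y::real) \<Longrightarrow> 0 \<le> 1 / y^2 - 1 / (sinh y)^2"
  using sinh_ge[of y] by (simp add: field_simps power_mono)

lemma id1: fixes a s gg G y D :: real assumes "y > 0" "D > 0"
 shows "(G * a * (y * D) - a * gg * (D + G * s * y)) /
        (y * D * (y * D)) =
        (a * (G * y - gg) * D / (y * y) - a * gg * (s * G) / y) / (D * D)"
  using assms(1,2) by (simp add: field_simps)
lemma id2: fixes a s gg G y D :: real assumes "y > 0" "D > 0" "D = a + s*gg"
 shows "y * ((a * ((G * y - gg) / y^2) * D - a * (gg / y) * (s * G)) / D^2)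
          + 3 * (a * (gg/y) / D) = a * (G * y^2 * a + 2 * gg * y * D) / (y^2 * D^2)"
  using assms(1,2) apply (simp add: field_simps power2_eq_square) by (simp add: assms(3) algebra_simps)

lemma l_deriv:
  fixes \<Gamma> \<alpha> y :: real
  assumes "\<Gamma> > 0" "\<alpha> > 0" "y > 0"
  defines "G' \<equiv> 1 / y^2 - 1 / (sinh y)^2"
  defines "D \<equiv> \<alpha> + sqrt \<Gamma> * g y"
  shows "(l \<Gamma> \<alpha> has_real_derivative
     (\<alpha> * ((G' * y - g y) / y^2) * D - \<alpha> * (g y / y) * (sqrt \<Gamma> * G')) / D^2) (at y)"
proof -
  have gd: "(g has_real_derivative G') (at y)" using g_deriv[OF assms(3)] by (simp add: G'_def)
  have Dp: "D > 0" using g_pos[OF assms(3)] assms unfolding D_def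
    by (simp add: add_pos_nonneg)
  have "((\<lambda>t. \<alpha> * (g t / t) / (\<alpha> + sqrt \<Gamma> * g t)) has_real_derivative
     (\<alpha> * ((G' * y - g y) / y^2) * D - \<alpha> * (g y / y) * (sqrt \<Gamma> * G')) / D^2) (at y)"
    using Dp assms(3)
    apply (auto intro!: derivative_eq_intros gd simp: D_def[symmetric] power2_eq_square)
    using id1[OF assms(3) Dp, of G' \<alpha> "g y" "sqrt \<Gamma>"] by simp
  moreover have "(\<lambda>t. \<alpha> * (g t / t) / (\<alpha> + sqrt \<Gamma> * g t)) = l \<Gamma> \<alpha>"
    by (auto simp: l_def p_def fun_eq_iff)
  ultimately show ?thesis by simp
qed

lemma key:
  fixes \<Gamma> \<alpha> y :: real
  assumes "\<Gamma> > 0" "\<alpha> > 0" "y > 0"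
  defines "G' \<equiv> 1 / y^2 - 1 / (sinh y)^2"
  defines "D \<equiv> \<alpha> + sqrt \<Gamma> * g y"
  shows "y * ((\<alpha> * ((G' * y - g y) / y^2) * D - \<alpha> * (g y / y) * (sqrt \<Gamma> * G')) / D^2)
          + 3 * l \<Gamma> \<alpha> y > 0"
proof -
  have G: "G' \<ge> 0" using gd_nonneg[OF assms(3)] by (simp add: G'_def)
  have gp: "g y > 0" using g_pos[OF assms(3)] .
  have Dp: "D > 0" using gp assms unfolding D_def by (simp add: add_pos_nonneg)
  have eq: "y * ((\<alpha> * ((G' * y - g y) / y^2) * D - \<alpha> * (g y / y) * (sqrt \<Gamma> * G')) / D^2)
          + 3 * l \<Gamma> \<alpha> y = \<alpha> * (G' * y^2 * \<alpha> + 2 * g y * y * D) / (y^2 * D^2)"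
    using id2[OF assms(3) Dp D_def[THEN meta_eq_to_obj_eq], of G'] unfolding l_def p_def D_def by simp
  have "\<alpha> * (G' * y^2 * \<alpha> + 2 * g y * y * D) / (y^2 * D^2) > 0"
    using G gp Dp assms by (intro divide_pos_pos mult_pos_pos add_nonneg_pos) auto
  then show ?thesis using eq by simp
qed

theorem mainTheorem3:
  fixes \<Gamma> \<alpha> :: real
  assumes "\<Gamma> > 0" and "\<alpha> > 0"
  shows "strict_mono_on {0<..} (H \<Gamma> \<alpha>)
     \<and> (\<forall>y>0. l \<Gamma> \<alpha> differentiable (at y)
            \<and> y * deriv (l \<Gamma> \<alpha>) y + 3 * l \<Gamma> \<alpha> y > 0)"
proof -
  define L where "L y = (\<alpha> * (((1 / y^2 - 1 / (sinh y)^2) * y - g y) / y^2) * (\<alpha> + sqrt \<Gamma> * g y)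
     - \<alpha> * (g y / y) * (sqrt \<Gamma> * (1 / y^2 - 1 / (sinh y)^2))) / (\<alpha> + sqrt \<Gamma> * g y)^2" for y
  have LD: "\<And>y. y > 0 \<Longrightarrow> (l \<Gamma> \<alpha> has_real_derivative L y) (at y)"
    using l_deriv[OF assms] unfolding L_def by blast
  have LK: "\<And>y. y > 0 \<Longrightarrow> y * L y + 3 * l \<Gamma> \<alpha> y > 0"
    using key[OF assms] unfolding L_def by blast
  have HD: "\<And>y. y > 0 \<Longrightarrow> (H \<Gamma> \<alpha> has_real_derivative y^2 * (y * L y + 3 * l \<Gamma> \<alpha> y)) (at y)"
  proof -
    fix y :: real assume y: "y > 0"
    have "((\<lambda>t. t^3 * l \<Gamma> \<alpha> t) has_real_derivative y^2 * (y * L y + 3 * l \<Gamma> \<alpha> y)) (at y)"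
      by (auto intro!: derivative_eq_intros LD[OF y] simp: algebra_simps power2_eq_square power3_eq_cube)
    then show "(H \<Gamma> \<alpha> has_real_derivative y^2 * (y * L y + 3 * l \<Gamma> \<alpha> y)) (at y)"
      by (simp add: H_def[abs_def])
  qed
  have "strict_mono_on {0<..} (H \<Gamma> \<alpha>)"
  proof (rule strict_mono_onI)
    fix a b :: real assume ab: "a \<in> {0<..}" "b \<in> {0<..}" "a < b"
    show "H \<Gamma> \<alpha> a < H \<Gamma> \<alpha> b"
    proof (rule DERIV_pos_imp_increasing_open[OF ab(3)])
      fix x assume "a < x" "x < b"
      then have x: "x > 0" using ab by auto
      show "\<exists>d. (H \<Gamma> \<alpha> has_real_derivative d) (at x) \<and> d > 0"
        using HD[OF x] LK[OF x] x by (intro exI[of _ "x^2 * (x * L x + 3 * l \<Gamma> \<alpha> x)"] conjI) auto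
    next
      show "continuous_on {a..b} (H \<Gamma> \<alpha>)"
        using ab by (intro continuous_at_imp_continuous_on ballI DERIV_isCont[OF HD]) auto
    qed
  qed
  moreover have "\<forall>y>0. l \<Gamma> \<alpha> differentiable (at y) \<and> y * deriv (l \<Gamma> \<alpha>) y + 3 * l \<Gamma> \<alpha> y > 0"
  proof (intro allI impI conjI)
    fix y :: real assume y: "y > 0"
    show "l \<Gamma> \<alpha> differentiable (at y)" using LD[OF y] real_differentiable_def by blast
    show "y * deriv (l \<Gamma> \<alpha>) y + 3 * l \<Gamma> \<alpha> y > 0"
      using DERIV_imp_deriv[OF LD[OF y]] LK[OF y] by simp
  qed
  ultimately show ?thesis by blast
qed

end
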